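(* Let $d=2$, $\theta\in\mathcal{S}_e^{\rm sep}$, and for $k\in\mathbb{R}$ let $$\Psi_\pm(k):=\int_{|x_2|<|k|}\mathcal{F}^{-1}\theta\big(\pm(|k|-|x_2|),x_2\big)dx_2.$$ Then $$\Psi_+(k)+\Psi_-(k)=\frac{1}{2\pi^2}\int_{\mathbb{R}}dw_1\sin(w_1|k|)\,\mathrm{PV}\!\!\int\Big(\frac{dw_2}{w_2+w_1}-\frac{dw_2}{w_2-w_1}\Big)\theta(w_1,w_2)+\frac{1}{2\pi^2}\int_{\mathbb{R}}dw_2\sin(w_2|k|)\,\mathrm{PV}\!\!\int\Big(\frac{dw_1}{w_1+w_2}-\frac{dw_1}{w_1-w_2}\Big)\theta(w_1,w_2).$$
   Context: Inverse Fourier transform on $\mathbb{R}^2$: $\mathcal{F}^{-1}\theta(\mathbf{x})=(2\pi)^{-2}\int_{\mathbb{R}^2}\theta(\mathbf{w})e^{i\mathbf{x}\cdot\mathbf{w}}d\mathbf{w}$. $\mathcal{S}_e^{\rm sep}$ is the linear span of functions $\varphi(\mathbf{w})+\varphi(-\mathbf{w})$ with $\varphi(\mathbf{w})=\varphi_1(w_1)\varphi_2(w_2)$, $\varphi_i\in\mathcal{S}(\mathbb{R})$ (Schwartz space). $\mathrm{PV}\!\int(\frac{dw_2}{w_2+w_1}-\frac{dw_2}{w_2-w_1})\theta:=\mathrm{PV}\!\int\frac{\theta(w_1,w_2)}{w_2+w_1}dw_2-\mathrm{PV}\!\int\frac{\theta(w_1,w_2)}{w_2-w_1}dw_2$, where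 $\mathrm{PV}\!\int\frac{g(w)}{w-c}dw=\lim_{\epsilon\to0+}\int_{|w-c|>\epsilon}\frac{g(w)}{w-c}dw$. *)

theory Defs
  imports "HOL-Analysis.Analysis"
begin

definition schwartz_real :: "(real \<Rightarrow> real) \<Rightarrow> bool" where
  "schwartz_real g \<longleftrightarrow>
     (\<forall>n x. ((deriv ^^ n) g) differentiable (at x)) \<and>
     (\<forall>m n. bounded (range (\<lambda>x. x ^ m * (deriv ^^ n) g x)))"

definition schwartz :: "(real \<Rightarrow> complex) \<Rightarrow> bool" where
  "schwartz f \<longleftrightarrow> schwartz_real (\<lambda>x. Re (f x)) \<and> schwartz_real (\<lambda>x. Im (f x))"

definition sep_even_schwartz :: "(real \<times> real \<Rightarrow> complex) set" where
  "sep_even_schwartz = {\<theta>. \<exists>(n::nat) (c::nat \<Rightarrow> complex) \<phi>1 \<phi>2.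
      (\<forall>i<n. schwartz (\<phi>1 i) \<and> schwartz (\<phi>2 i)) \<and>
      (\<forall>w1 w2. \<theta> (w1, w2) =
         (\<Sum>i<n. c i * (\<phi>1 i w1 * \<phi>2 i w2 + \<phi>1 i (-w1) * \<phi>2 i (-w2))))}"

definition inv_fourier2 :: "(real \<times> real \<Rightarrow> complex) \<Rightarrow> real \<times> real \<Rightarrow> complex" where
  "inv_fourier2 \<theta> x = (1 / (2 * pi) ^ 2) *
      (LINT w|lborel. \<theta> w * exp (\<i> * complex_of_real (x \<bullet> w)))"

definition PV :: "(real \<Rightarrow> complex) \<Rightarrow> real \<Rightarrow> complex" where
  "PV g c = Lim (at_right 0)
      (\<lambda>\<epsilon>. LINT w : {w. \<epsilon> < \<bar>w - c\<bar>} | lborel. g w / complex_of_real (w - c))"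

text \<open>Psi_s(k) for sign s = 1 (Psi_+) or s = -1 (Psi_-).\<close>
definition Psi :: "(real \<times> real \<Rightarrow> complex) \<Rightarrow> real \<Rightarrow> real \<Rightarrow> complex" where
  "Psi \<theta> s k = (LINT x2 : {x2. \<bar>x2\<bar> < \<bar>k\<bar>} | lborel.
      inv_fourier2 \<theta> (s * (\<bar>k\<bar> - \<bar>x2\<bar>), x2))"

end

theory Submission
  imports Defs
begin

definition nice :: "(real \<Rightarrow> complex) \<Rightarrow> bool" where
  "nice f \<longleftrightarrow> (\<exists>C. \<forall>x. norm (f x) \<le> C / (1 + x\<^sup>2)) \<and>
     (\<exists>M\<ge>0. \<forall>x y. norm (f x - f y) \<le> M * \<bar>x - y\<bar>)"

lemma nice_continuous: "nice f \<Longrightarrow> continuous_on UNIV f"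
proof -
  assume "nice f"
  then obtain M where M: "M \<ge> 0" "\<And>x y. norm (f x - f y) \<le> M * \<bar>x - y\<bar>"
    unfolding nice_def by auto
  have "M-lipschitz_on UNIV f"
    unfolding lipschitz_on_def using M by (auto simp: dist_norm)
  then show ?thesis by (rule lipschitz_on_continuous_on)
qed

lemma nice_measurable[measurable]: "nice f \<Longrightarrow> f \<in> borel_measurable borel"
  using nice_continuous borel_measurable_continuous_onI by blast

lemma one_plus_sq_ne: "1 + (x::real)\<^sup>2 \<noteq> 0"
  by (smt (verit) one_power2 sum_power2_eq_zero_iff)

lemma integrable_inv_1_sq: "integrable lborel (\<lambda>x::real. 1 / (1 + x\<^sup>2))"
proof -
  have "set_integrable lborel (einterval (-\<infinity>) \<infinity>) (\<lambda>x::real. inverse (1 + x\<^sup>2))"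
  proof (rule interval_integral_FTC_nonneg(1)[where F=arctan and A="-(pi/2)" and B="pi/2"])
    show "((arctan \<circ> real_of_ereal) \<longlongrightarrow> - (pi / 2)) (at_right (- \<infinity>))"
      unfolding ereal_tendsto_simps by (rule tendsto_arctan_at_bot)
    show "((arctan \<circ> real_of_ereal) \<longlongrightarrow> (pi / 2)) (at_left \<infinity>)"
      unfolding ereal_tendsto_simps by (rule tendsto_arctan_at_top)
  qed (auto intro!: DERIV_arctan continuous_intros simp: add_pos_nonneg one_plus_sq_ne)
  then show ?thesis
    by (simp add: set_integrable_def einterval_iff divide_inverse)
qed

lemma nice_integrable: "nice f \<Longrightarrow> integrable lborel f"
proof -
  assume "nice f"
  then obtain C where C: "\<And>x. norm (f x) \<le> C / (1 + x\<^sup>2)" unfolding nice_def by auto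
  show ?thesis
  proof (rule Bochner_Integration.integrable_bound)
    show "integrable lborel (\<lambda>x. C * (1 / (1 + x\<^sup>2)))"
      using integrable_mult_left[OF integrable_inv_1_sq, of C] by simp
    show "f \<in> borel_measurable lborel" using \<open>nice f\<close> by simp
    show "AE x in lborel. norm (f x) \<le> norm (C * (1 / (1 + x\<^sup>2)))"
      using C by (auto intro!: AE_I2 order_trans[OF C] simp: abs_if)
  qed
qed

lemma nice_bounded: "nice f \<Longrightarrow> \<exists>B. \<forall>x. norm (f x) \<le> B"
proof -
  assume "nice f"
  then obtain C where C: "\<And>x. norm (f x) \<le> C / (1 + x\<^sup>2)" unfolding nice_def by auto
  have "C / (1 + x\<^sup>2) \<le> \<bar>C\<bar>" for x
  proof -
    have "C / (1 + x\<^sup>2) \<le> \<bar>C\<bar> / (1 + x\<^sup>2)" by (intro divide_right_mono) (auto simp: add_pos_nonneg)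
    also have "\<dots> \<le> \<bar>C\<bar> / 1" by (rule divide_left_mono) (auto simp: add_pos_nonneg)
    finally show ?thesis by simp
  qed
  then show ?thesis using C order_trans by blast
qed

lemma nice_add: "nice f \<Longrightarrow> nice g \<Longrightarrow> nice (\<lambda>x. f x + g x)"
proof -
  assume f: "nice f" and g: "nice g"
  from f obtain C1 M1 where C1: "\<And>x. norm (f x) \<le> C1 / (1 + x\<^sup>2)" and M1: "M1 \<ge> 0" "\<And>x y. norm (f x - f y) \<le> M1 * \<bar>x - y\<bar>"
    unfolding nice_def by auto
  from g obtain C2 M2 where C2: "\<And>x. norm (g x) \<le> C2 / (1 + x\<^sup>2)" and M2: "M2 \<ge> 0" "\<And>x y. norm (g x - g y) \<le> M2 * \<bar>x - y\<bar>"
    unfolding nice_def by auto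
  have "norm (f x + g x) \<le> (C1 + C2) / (1 + x\<^sup>2)" for x
    using norm_triangle_ineq[of "f x" "g x"] C1[of x] C2[of x] by (simp add: add_divide_distrib)
  moreover have "norm ((f x + g x) - (f y + g y)) \<le> (M1 + M2) * \<bar>x - y\<bar>" for x y
    using norm_triangle_ineq[of "f x - f y" "g x - g y"] M1(2)[of x y] M2(2)[of x y]
    by (simp add: algebra_simps)
  ultimately show ?thesis unfolding nice_def using M1 M2 by (metis add_nonneg_nonneg)
qed

lemma nice_cmult: "nice f \<Longrightarrow> nice (\<lambda>x. c * f x)"
proof -
  assume f: "nice f"
  from f obtain C1 M1 where C1: "\<And>x. norm (f x) \<le> C1 / (1 + x\<^sup>2)" and M1: "M1 \<ge> 0" "\<And>x y. norm (f x - f y) \<le> M1 * \<bar>x - y\<bar>"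
    unfolding nice_def by auto
  have "norm (c * f x) \<le> (norm c * C1) / (1 + x\<^sup>2)" for x
    using mult_left_mono[OF C1[of x], of "norm c"] by (simp add: norm_mult)
  moreover have "norm (c * f x - c * f y) \<le> (norm c * M1) * \<bar>x - y\<bar>" for x y
    using mult_left_mono[OF M1(2)[of x y], of "norm c"] by (simp add: norm_mult right_diff_distrib[symmetric])
  ultimately show ?thesis unfolding nice_def using M1 by (intro conjI exI[of _ "norm c * M1"] exI[of _ "norm c * C1"]) auto
qed

lemma nice_zero: "nice (\<lambda>x. 0)"
  unfolding nice_def by (auto intro!: exI[of _ 0])

lemma nice_sum: "finite I \<Longrightarrow> (\<And>i. i \<in> I \<Longrightarrow> nice (f i)) \<Longrightarrow> nice (\<lambda>x. \<Sum>i\<in>I. f i x)"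
  by (induction I rule: finite_induct) (auto intro: nice_add nice_zero)

lemma nice_reflect: "nice f \<Longrightarrow> nice (\<lambda>x. f (- x))"
  unfolding nice_def by (metis (no_types, opaque_lifting) abs_minus_commute minus_diff_eq minus_diff_minus power2_minus diff_minus_eq_add)

lemma schwartz_real_props:
  assumes "schwartz_real g"
  shows "(\<exists>C. \<forall>x. \<bar>g x\<bar> \<le> C / (1 + x\<^sup>2)) \<and> (\<exists>M\<ge>0. \<forall>x y. \<bar>g x - g y\<bar> \<le> M * \<bar>x - y\<bar>)"
proof -
  have diff: "\<And>x. g differentiable (at x)" and bnd: "\<And>m n. bounded (range (\<lambda>x. x ^ m * (deriv ^^ n) g x))"
    using assms unfolding schwartz_real_def by (metis funpow_0)+
  obtain B0 where B0: "\<And>x. \<bar>g x\<bar> \<le> B0"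
    using bnd[of 0 0] unfolding bounded_iff by auto
  obtain B2 where B2: "\<And>x. \<bar>x\<^sup>2 * g x\<bar> \<le> B2"
    using bnd[of 2 0] unfolding bounded_iff by auto
  obtain B1 where B1: "\<And>x. \<bar>deriv g x\<bar> \<le> B1"
    using bnd[of 0 1] unfolding bounded_iff by auto
  have "\<bar>g x\<bar> \<le> (B0 + B2) / (1 + x\<^sup>2)" for x
  proof -
    have pos: "0 < 1 + x\<^sup>2" by (simp add: add_pos_nonneg)
    have "(1 + x\<^sup>2) * \<bar>g x\<bar> = \<bar>g x\<bar> + \<bar>x\<^sup>2 * g x\<bar>"
      by (simp add: algebra_simps abs_mult)
    also have "\<dots> \<le> B0 + B2" using B0[of x] B2[of x] by simp
    finally show ?thesis using pos by (simp add: pos_le_divide_eq mult.commute)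
  qed
  moreover
  have B1nn: "0 \<le> B1" using B1[of 0] by simp
  have lip: "\<bar>g x - g y\<bar> \<le> B1 * \<bar>x - y\<bar>" if "x < y" for x y
  proof -
    obtain z where "g y - g x = (y - x) * deriv g z"
      using MVT2[of x y g "deriv g"] \<open>x < y\<close> diff DERIV_deriv_iff_real_differentiable by blast
    then have "\<bar>g y - g x\<bar> = \<bar>y - x\<bar> * \<bar>deriv g z\<bar>" by (simp add: abs_mult)
    then have "\<bar>g x - g y\<bar> = \<bar>y - x\<bar> * \<bar>deriv g z\<bar>" by (simp add: abs_minus_commute)
    also have "\<dots> \<le> \<bar>y - x\<bar> * B1" by (intro mult_left_mono B1) auto
    finally show ?thesis by (simp add: abs_minus_commute mult.commute)
  qed
  have "\<bar>g x - g y\<bar> \<le> B1 * \<bar>x - y\<bar>" for x y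
    using lip[of x y] lip[of y x] by (cases x y rule: linorder_cases) (auto simp: abs_minus_commute)
  ultimately show ?thesis using B1nn by blast
qed

lemma schwartz_nice: "schwartz f \<Longrightarrow> nice f"
proof -
  assume "schwartz f"
  then have r: "schwartz_real (\<lambda>x. Re (f x))" and i: "schwartz_real (\<lambda>x. Im (f x))"
    unfolding schwartz_def by auto
  obtain C1 M1 where C1: "\<And>x. \<bar>Re (f x)\<bar> \<le> C1 / (1 + x\<^sup>2)" and M1: "M1 \<ge> 0" "\<And>x y. \<bar>Re (f x) - Re (f y)\<bar> \<le> M1 * \<bar>x - y\<bar>"
    using schwartz_real_props[OF r] by blast
  obtain C2 M2 where C2: "\<And>x. \<bar>Im (f x)\<bar> \<le> C2 / (1 + x\<^sup>2)" and M2: "M2 \<ge> 0" "\<And>x y. \<bar>Im (f x) - Im (f y)\<bar> \<le> M2 * \<bar>x - y\<bar>"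
    using schwartz_real_props[OF i] by blast
  have "norm (f x) \<le> (C1 + C2) / (1 + x\<^sup>2)" for x
    using cmod_le[of "f x"] C1[of x] C2[of x] by (simp add: add_divide_distrib)
  moreover have "norm (f x - f y) \<le> (M1 + M2) * \<bar>x - y\<bar>" for x y
    using cmod_le[of "f x - f y"] M1(2)[of x y] M2(2)[of x y] by (simp add: algebra_simps)
  ultimately show ?thesis unfolding nice_def using M1 M2 by (metis add_nonneg_nonneg)
qed

definition trunc :: "(real \<Rightarrow> complex) \<Rightarrow> real \<Rightarrow> real \<Rightarrow> complex" where
  "trunc g e c = (LINT w : {w. e < \<bar>w - c\<bar>} | lborel. g w / complex_of_real (w - c))"

lemma PV_trunc: "PV g c = Lim (at_right 0) (\<lambda>e. trunc g e c)"
  unfolding PV_def trunc_def ..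

lemma trunc_integrable:
  assumes g: "nice g" and e: "0 < e"
  shows "set_integrable lborel {w. e < \<bar>w - c\<bar>} (\<lambda>w. g w / complex_of_real (w - c))"
  unfolding set_integrable_def
proof (rule Bochner_Integration.integrable_bound)
  show "integrable lborel (\<lambda>w. (1 / e) *\<^sub>R g w)" using nice_integrable[OF g] by simp
  show "(\<lambda>w. indicat_real {w. e < \<bar>w - c\<bar>} w *\<^sub>R (g w / complex_of_real (w - c))) \<in> borel_measurable lborel"
    using g by measurable
  show "AE w in lborel. norm (indicat_real {w. e < \<bar>w - c\<bar>} w *\<^sub>R (g w / complex_of_real (w - c))) \<le> norm ((1 / e) *\<^sub>R g w)"
  proof (rule AE_I2)
    fix w
    show "norm (indicat_real {w. e < \<bar>w - c\<bar>} w *\<^sub>R (g w / complex_of_real (w - c))) \<le> norm ((1 / e) *\<^sub>R g w)"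
    proof (cases "e < \<bar>w - c\<bar>")
      case True
      then have "norm (g w / complex_of_real (w - c)) = norm (g w) / \<bar>w - c\<bar>"
        by (simp add: norm_divide del: of_real_diff)
      also have "\<dots> \<le> norm (g w) / e" using True e by (intro divide_left_mono) auto
      finally show ?thesis using True e by (simp add: divide_inverse mult.commute)
    qed auto
  qed
qed

context
  fixes g :: "real \<Rightarrow> complex" and M :: real
  assumes g: "nice g" and M: "M \<ge> 0" "\<And>x y. norm (g x - g y) \<le> M * \<bar>x - y\<bar>"
begin

definition vv :: "real \<Rightarrow> real \<Rightarrow> complex" where
  "vv c t = (g (c + t) - (if \<bar>t\<bar> < 1 then g c else 0)) / complex_of_real t"

definition DD :: "real \<Rightarrow> real \<Rightarrow> real" where
  "DD c t = M * indicator {-1..1} t + norm (g (c + t))"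

lemma vv_measurable[measurable]: "(\<lambda>t. vv c t) \<in> borel_measurable borel"
  unfolding vv_def using g by measurable

lemma g_shift_integrable: "integrable lborel (\<lambda>t. g (c + t))"
  using lborel_integrable_real_affine[OF nice_integrable[OF g], of 1 c] by simp

lemma ind_Icc_integrable: "integrable lborel (indicat_real {-1..1::real})"
  by (rule integrable_real_indicator) auto

lemma DD_integrable: "integrable lborel (DD c)"
  unfolding DD_def
  by (intro Bochner_Integration.integrable_add integrable_mult_right integrable_norm g_shift_integrable ind_Icc_integrable)

lemma DD_integral: "integral\<^sup>L lborel (DD c) = M * (LINT t|lborel. indicator {-1..1::real} t) + (LINT t|lborel. norm (g t))"
proof -
  have i1: "integrable lborel (\<lambda>t. M * indicat_real {-1..1::real} t)"
    by (intro integrable_mult_right ind_Icc_integrable)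
  have i2: "integrable lborel (\<lambda>t. norm (g (c + t)))"
    by (intro integrable_norm g_shift_integrable)
  have "integral\<^sup>L lborel (DD c) = (LINT t|lborel. M * indicat_real {-1..1::real} t) + (LINT t|lborel. norm (g (c + t)))"
    unfolding DD_def by (rule Bochner_Integration.integral_add[OF i1 i2])
  also have "(LINT t|lborel. norm (g (c + t))) = (LINT t|lborel. norm (g t))"
    using lborel_integral_real_affine[of 1 "\<lambda>t. norm (g t)" c] by simp
  finally show ?thesis by simp
qed

lemma vv_bound: "norm (vv c t) \<le> DD c t"
proof (cases "t = 0")
  case True then show ?thesis by (simp add: vv_def DD_def M)
next
  case False
  show ?thesis
  proof (cases "\<bar>t\<bar> < 1")
    case True
    have "norm (vv c t) = norm (g (c + t) - g c) / \<bar>t\<bar>" using True by (simp add: vv_def norm_divide)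
    also have "\<dots> \<le> M * \<bar>t\<bar> / \<bar>t\<bar>" using M(2)[of "c + t" c] False by (intro divide_right_mono) auto
    also have "\<dots> = M" using False by simp
    finally have "norm (vv c t) \<le> M" .
    moreover have "indicator {-1..1} t = (1::real)" using True by (auto simp: indicator_def abs_less_iff)
    ultimately show ?thesis unfolding DD_def by (metis add_increasing2 mult.right_neutral norm_ge_zero)
  next
    case False
    have "norm (vv c t) = norm (g (c + t)) / \<bar>t\<bar>" using False by (simp add: vv_def norm_divide)
    also have "\<dots> \<le> norm (g (c + t)) / 1" using False by (intro divide_left_mono) auto
    finally have "norm (vv c t) \<le> norm (g (c + t))" by simp
    moreover have "0 \<le> M * indicator {-1..1} t" using M by simp
    ultimately show ?thesis unfolding DD_def by linarith
  qed
qed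

lemma vv_integrable: "integrable lborel (\<lambda>t. indicator S t *\<^sub>R vv c t)" if "S \<in> sets borel"
proof (rule Bochner_Integration.integrable_bound[OF DD_integrable])
  show "(\<lambda>t. indicat_real S t *\<^sub>R vv c t) \<in> borel_measurable lborel" using that by measurable
  show "AE x in lborel. norm (indicat_real S x *\<^sub>R vv c x) \<le> norm (DD c x)"
    using vv_bound order_trans[OF _ vv_bound] by (auto intro!: AE_I2 simp: indicator_def DD_def)
qed

lemma trunc_eq_vv:
  assumes e: "0 < e"
  shows "trunc g e c = (LINT t|lborel. indicator {t. e < \<bar>t\<bar>} t *\<^sub>R vv c t)"
proof -
  let ?h = "\<lambda>t. indicator {t. e < \<bar>t\<bar>} t *\<^sub>R ((if \<bar>t\<bar> < 1 then g c else 0) / complex_of_real t)"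
  let ?f = "\<lambda>t. indicator {t. e < \<bar>t\<bar>} t *\<^sub>R (g (c + t) / complex_of_real t)"
  let ?F = "\<lambda>w. indicat_real {w. e < \<bar>w - c\<bar>} w *\<^sub>R (g w / complex_of_real (w - c))"
  have "trunc g e c = (LINT t|lborel. ?F (c + 1 * t))"
    unfolding trunc_def set_lebesgue_integral_def
    using lborel_integral_real_affine[of 1 ?F c] by simp
  also have "\<dots> = (LINT t|lborel. ?f t)"
    by (rule Bochner_Integration.integral_cong) (auto simp: indicator_def)
  finally have teq: "trunc g e c = (LINT t|lborel. ?f t)" .
  have hint: "integrable lborel ?h"
  proof (rule Bochner_Integration.integrable_bound)
    show "integrable lborel (\<lambda>t. (norm (g c) / e) * indicator {-1..1::real} t)"
      by (intro integrable_mult_right) (auto simp: emeasure_lborel_Icc_eq)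
    show "?h \<in> borel_measurable lborel" by measurable
    show "AE x in lborel. norm (?h x) \<le> norm ((norm (g c) / e) * indicator {-1..1::real} x)"
    proof (rule AE_I2)
      fix t
      show "norm (?h t) \<le> norm ((norm (g c) / e) * indicator {-1..1::real} t)"
      proof (cases "e < \<bar>t\<bar> \<and> \<bar>t\<bar> < 1")
        case True
        then have "norm (?h t) = norm (g c) / \<bar>t\<bar>" by (simp add: norm_divide)
        also have "\<dots> \<le> norm (g c) / e" using True e by (intro divide_left_mono) auto
        moreover have "indicator {-1..1} t = (1::real)" using True by (auto simp: indicator_def abs_less_iff)
        ultimately show ?thesis using e by simp
      qed auto
    qed
  qed
  have fint0: "integrable lborel (\<lambda>t. ?F (c + 1 * t))"
    using lborel_integrable_real_affine[OF trunc_integrable[OF g e, of c, unfolded set_integrable_def], of 1 c] by simp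
  have fint: "integrable lborel ?f"
    by (rule Bochner_Integration.integrable_cong[THEN iffD1, OF refl _ fint0]) (auto simp: indicator_def)
  have odd: "(LINT t|lborel. ?h t) = 0"
  proof -
    have "(LINT t|lborel. ?h t) = (LINT t|lborel. ?h (0 + (-1) * t))"
      using lborel_integral_real_affine[of "-1" ?h 0] by simp
    also have "\<dots> = (LINT t|lborel. - ?h t)"
      by (rule Bochner_Integration.integral_cong) (auto simp: indicator_def)
    also have "\<dots> = - (LINT t|lborel. ?h t)" by simp
    finally show ?thesis by simp
  qed
  have "(LINT t|lborel. indicator {t. e < \<bar>t\<bar>} t *\<^sub>R vv c t) = (LINT t|lborel. ?f t - ?h t)"
    by (rule Bochner_Integration.integral_cong) (auto simp: vv_def indicator_def diff_divide_distrib)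
  also have "\<dots> = (LINT t|lborel. ?f t) - (LINT t|lborel. ?h t)"
    using fint hint by (rule Bochner_Integration.integral_diff)
  finally show ?thesis using odd teq by simp
qed

lemma trunc_bound_aux: "0 < e \<Longrightarrow> norm (trunc g e c) \<le> M * (LINT t|lborel. indicator {-1..1::real} t) + (LINT t|lborel. norm (g t))"
proof -
  assume e: "0 < e"
  have "norm (trunc g e c) \<le> (LINT t|lborel. norm (indicator {t. e < \<bar>t\<bar>} t *\<^sub>R vv c t))"
    unfolding trunc_eq_vv[OF e] by (rule integral_norm_bound)
  also have "\<dots> \<le> integral\<^sup>L lborel (DD c)"
  proof (rule integral_mono)
    show "integrable lborel (\<lambda>t. norm (indicat_real {t. e < \<bar>t\<bar>} t *\<^sub>R vv c t))"
      by (intro integrable_norm vv_integrable) measurable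
    show "integrable lborel (DD c)" by (rule DD_integrable)
    show "norm (indicat_real {t. e < \<bar>t\<bar>} t *\<^sub>R vv c t) \<le> DD c t" for t
      using vv_bound[of c t] by (auto simp: indicator_def DD_def M intro: order_trans[OF _ vv_bound])
  qed
  finally show ?thesis using DD_integral by simp
qed

lemma trunc_tendsto_aux: "((\<lambda>e. trunc g e c) \<longlongrightarrow> (LINT t|lborel. vv c t)) (at_right 0)"
proof -
  let ?s = "\<lambda>r t. indicator {t. inverse r < \<bar>t\<bar>} t *\<^sub>R vv c t"
  have lim: "((\<lambda>r. integral\<^sup>L lborel (?s r)) \<longlongrightarrow> (LINT t|lborel. vv c t)) at_top"
  proof (rule integral_dominated_convergence_at_top[where w="DD c"])
    show "vv c \<in> borel_measurable lborel" by measurable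
    show "?s r \<in> borel_measurable lborel" for r by measurable
    show "integrable lborel (DD c)" by (rule DD_integrable)
    show "AE t in lborel. ((\<lambda>r. ?s r t) \<longlongrightarrow> vv c t) at_top"
    proof (rule AE_I2)
      fix t
      show "((\<lambda>r. ?s r t) \<longlongrightarrow> vv c t) at_top"
      proof (cases "t = 0")
        case True then show ?thesis by (simp add: vv_def)
      next
        case False
        have "\<forall>\<^sub>F r in at_top. ?s r t = vv c t"
        proof (rule eventually_mono[OF eventually_gt_at_top[of "1 / \<bar>t\<bar>"]])
          fix r assume r: "1 / \<bar>t\<bar> < r"
          have "0 < 1 / \<bar>t\<bar>" using False by simp
          then have "inverse r < \<bar>t\<bar>" using r False
            by (metis divide_less_eq_1_pos inverse_eq_divide inverse_less_imp_less less_trans nonzero_inverse_inverse_eq zero_less_abs_iff inverse_positive_iff_positive)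
          then show "?s r t = vv c t" by simp
        qed
        then show ?thesis by (rule tendsto_eventually)
      qed
    qed
    show "\<forall>\<^sub>F r in at_top. AE t in lborel. norm (?s r t) \<le> DD c t"
      using vv_bound order_trans[OF _ vv_bound] by (auto intro!: always_eventually AE_I2 simp: indicator_def DD_def M)
  qed
  have "((\<lambda>e. integral\<^sup>L lborel (?s (inverse e))) \<longlongrightarrow> (LINT t|lborel. vv c t)) (at_right 0)"
    by (rule filterlim_compose[OF lim filterlim_inverse_at_top_right])
  moreover have "\<forall>\<^sub>F e in at_right 0. integral\<^sup>L lborel (?s (inverse e)) = trunc g e c"
    by (rule eventually_mono[OF eventually_at_right_less]) (simp add: trunc_eq_vv)
  ultimately show ?thesis by (rule Lim_transform_eventually)
qed

end

lemma trunc_bound: "nice g \<Longrightarrow> \<exists>B. \<forall>e c. 0 < e \<longrightarrow> norm (trunc g e c) \<le> B"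
proof -
  assume g: "nice g"
  then obtain M where M: "M \<ge> 0" "\<And>x y. norm (g x - g y) \<le> M * \<bar>x - y\<bar>" unfolding nice_def by auto
  show ?thesis using trunc_bound_aux[OF g M] by blast
qed

lemma trunc_tendsto: "nice g \<Longrightarrow> ((\<lambda>e. trunc g e c) \<longlongrightarrow> PV g c) (at_right 0)"
proof -
  assume g: "nice g"
  then obtain M where M: "M \<ge> 0" "\<And>x y. norm (g x - g y) \<le> M * \<bar>x - y\<bar>" unfolding nice_def by auto
  have t: "((\<lambda>e. trunc g e c) \<longlongrightarrow> (LINT t|lborel. vv g c t)) (at_right 0)"
    by (rule trunc_tendsto_aux[OF g M])
  then have "PV g c = (LINT t|lborel. vv g c t)"
    unfolding PV_trunc by (intro tendsto_Lim) auto
  then show ?thesis using t by simp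
qed

lemma trunc_sum:
  assumes I: "finite I" and b: "\<And>i. i \<in> I \<Longrightarrow> nice (b i)" and e: "0 < e"
  shows "trunc (\<lambda>y. \<Sum>i\<in>I. a i * b i y) e c = (\<Sum>i\<in>I. a i * trunc (b i) e c)"
proof -
  have "trunc (\<lambda>y. \<Sum>i\<in>I. a i * b i y) e c =
     (LINT w|lborel. (\<Sum>i\<in>I. a i * (indicat_real {w. e < \<bar>w - c\<bar>} w *\<^sub>R (b i w / complex_of_real (w - c)))))"
    unfolding trunc_def set_lebesgue_integral_def
    by (rule Bochner_Integration.integral_cong) (auto simp: indicator_def sum_divide_distrib sum_distrib_left)
  also have "\<dots> = (\<Sum>i\<in>I. (LINT w|lborel. a i * (indicat_real {w. e < \<bar>w - c\<bar>} w *\<^sub>R (b i w / complex_of_real (w - c)))))"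
  proof (rule Bochner_Integration.integral_sum)
    fix i assume "i \<in> I"
    then show "integrable lborel (\<lambda>w. a i * (indicat_real {w. e < \<bar>w - c\<bar>} w *\<^sub>R (b i w / complex_of_real (w - c))))"
      using trunc_integrable[OF b e, of i c] unfolding set_integrable_def by (intro integrable_mult_right)
  qed
  also have "\<dots> = (\<Sum>i\<in>I. a i * trunc (b i) e c)"
    unfolding trunc_def set_lebesgue_integral_def by (simp only: integral_mult_right_zero)
  finally show ?thesis .
qed

lemma integrable_mult_pair:
  fixes f :: "'a::euclidean_space \<Rightarrow> real" and g :: "'b::euclidean_space \<Rightarrow> real"
  assumes f: "integrable lborel f" and g: "integrable lborel g"
  shows "integrable (lborel \<Otimes>\<^sub>M lborel) (\<lambda>z. f (fst z) * g (snd z))"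
proof -
  have fm[measurable]: "f \<in> borel_measurable lborel" using f by auto
  have gm[measurable]: "g \<in> borel_measurable lborel" using g by auto
  have "(\<integral>\<^sup>+z. ennreal (norm (f (fst z) * g (snd z))) \<partial>(lborel \<Otimes>\<^sub>M lborel)) =
        (\<integral>\<^sup>+z. ennreal (norm (f (fst z))) * ennreal (norm (g (snd z))) \<partial>(lborel \<Otimes>\<^sub>M lborel))"
    by (intro nn_integral_cong) (auto simp: abs_mult ennreal_mult)
  also have "\<dots> = (\<integral>\<^sup>+x. \<integral>\<^sup>+y. ennreal (norm (f x)) * ennreal (norm (g y)) \<partial>lborel \<partial>lborel)"
    using lborel.nn_integral_fst[of "\<lambda>z. ennreal (norm (f (fst z))) * ennreal (norm (g (snd z)))"] by simp
  also have "\<dots> = (\<integral>\<^sup>+x. ennreal (norm (f x)) * (\<integral>\<^sup>+y. ennreal (norm (g y)) \<partial>lborel) \<partial>lborel)"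
    by (subst nn_integral_cmult) auto
  also have "\<dots> = (\<integral>\<^sup>+x. ennreal (norm (f x)) \<partial>lborel) * (\<integral>\<^sup>+y. ennreal (norm (g y)) \<partial>lborel)"
    by (subst nn_integral_multc) auto
  also have "\<dots> < \<infinity>"
    using f g unfolding integrable_iff_bounded by (simp add: ennreal_mult_less_top)
  finally show ?thesis unfolding integrable_iff_bounded by auto
qed

lemma integrable_mult_pair_complex:
  fixes f g :: "real \<Rightarrow> complex"
  assumes f: "integrable lborel f" and g: "integrable lborel g"
  shows "integrable (lborel \<Otimes>\<^sub>M lborel) (\<lambda>z. f (fst z) * g (snd z))"
proof (rule Bochner_Integration.integrable_bound)
  show "integrable (lborel \<Otimes>\<^sub>M lborel) (\<lambda>z. norm (f (fst z)) * norm (g (snd z)))"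
    by (rule integrable_mult_pair) (use f g in auto)
  have [measurable]: "f \<in> borel_measurable lborel" "g \<in> borel_measurable lborel" using f g by auto
  show "(\<lambda>z. f (fst z) * g (snd z)) \<in> borel_measurable (lborel \<Otimes>\<^sub>M lborel)" by measurable
qed (auto simp: norm_mult)

definition sepform :: "'i set \<Rightarrow> ('i \<Rightarrow> real \<Rightarrow> complex) \<Rightarrow> ('i \<Rightarrow> real \<Rightarrow> complex) \<Rightarrow> (real \<times> real \<Rightarrow> complex) \<Rightarrow> bool" where
  "sepform I a b \<theta> \<longleftrightarrow> finite I \<and> (\<forall>i\<in>I. nice (a i) \<and> nice (b i)) \<and> (\<forall>x y. \<theta> (x, y) = (\<Sum>i\<in>I. a i x * b i y))"

lemma sepform_swap: "sepform I a b \<theta> \<Longrightarrow> sepform I b a (\<lambda>(x, y). \<theta> (y, x))"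
  unfolding sepform_def by (auto simp: mult.commute)

lemma sepform_eq: "sepform I a b \<theta> \<Longrightarrow> \<theta> = (\<lambda>z. \<Sum>i\<in>I. a i (fst z) * b i (snd z))"
  unfolding sepform_def by auto

lemma sepform_continuous: "sepform I a b \<theta> \<Longrightarrow> continuous_on UNIV \<theta>"
proof -
  assume s: "sepform I a b \<theta>"
  have ca: "continuous_on UNIV (\<lambda>z::real\<times>real. a i (fst z))" and cb: "continuous_on UNIV (\<lambda>z::real\<times>real. b i (snd z))" if "i \<in> I" for i
    using s that unfolding sepform_def
    by (auto intro!: continuous_on_compose2[OF nice_continuous continuous_on_fst] continuous_on_compose2[OF nice_continuous continuous_on_snd] continuous_on_id)
  show ?thesis unfolding sepform_eq[OF s]
    by (intro continuous_on_sum continuous_on_mult ca cb)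
qed

lemma sepform_measurable: "sepform I a b \<theta> \<Longrightarrow> \<theta> \<in> borel_measurable borel"
  using sepform_continuous borel_measurable_continuous_onI by blast

lemma sepform_integrable: "sepform I a b \<theta> \<Longrightarrow> integrable lborel \<theta>"
proof -
  assume s: "sepform I a b \<theta>"
  have "integrable (lborel \<Otimes>\<^sub>M lborel) (\<lambda>z. \<Sum>i\<in>I. a i (fst z) * b i (snd z))"
    using s unfolding sepform_def
    by (intro Bochner_Integration.integrable_sum) (auto intro!: integrable_mult_pair_complex nice_integrable)
  then show ?thesis unfolding sepform_eq[OF s] lborel_prod .
qed

lemma sepform_slice: "sepform I a b \<theta> \<Longrightarrow> nice (\<lambda>y. \<theta> (x, y))"
  unfolding sepform_def by (auto intro!: nice_sum nice_cmult)


definition kern :: "real \<Rightarrow> real \<times> real \<Rightarrow> real" where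
  "kern K w = (sin (K * fst w) - sin (K * snd w)) / (fst w - snd w) + (sin (K * fst w) + sin (K * snd w)) / (fst w + snd w)"

definition phi :: "real \<Rightarrow> real \<Rightarrow> real \<Rightarrow> real \<Rightarrow> complex" where
  "phi K w1 w2 x = exp (\<i> * complex_of_real ((K - \<bar>x\<bar>) * w1 + x * w2)) + exp (\<i> * complex_of_real (- ((K - \<bar>x\<bar>) * w1) + x * w2))"

lemma kern_measurable[measurable]: "kern K \<in> borel_measurable borel"
proof -
  have A: "(\<lambda>x::real\<times>real. sin (K * fst x) - sin (K * snd x)) \<in> borel_measurable borel"
    and B: "(\<lambda>x::real\<times>real. fst x - snd x) \<in> borel_measurable borel"
    and C: "(\<lambda>x::real\<times>real. sin (K * fst x) + sin (K * snd x)) \<in> borel_measurable borel"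
    and D: "(\<lambda>x::real\<times>real. fst x + snd x) \<in> borel_measurable borel"
    by (intro borel_measurable_continuous_onI continuous_intros)+
  show ?thesis unfolding kern_def
    by (intro borel_measurable_add borel_measurable_divide A B C D)
qed

lemma phi_continuous: "isCont (phi K w1 w2) x"
  unfolding phi_def by (intro continuous_intros)

lemma phi_sym: "phi K w1 w2 (-x) + phi K w1 w2 x = complex_of_real (4 * cos ((K - \<bar>x\<bar>) * w1) * cos (x * w2))"
proof -
  have e: "exp (\<i> * complex_of_real t) = cis t" for t by (simp add: cis_conv_exp)
  show ?thesis
    unfolding phi_def e
    by (simp add: complex_eq_iff cos_add sin_add cos_diff sin_diff algebra_simps)
qed

lemma kern_FTC:
  assumes K: "0 < K" and d1: "w1 \<noteq> w2" and d2: "w1 \<noteq> - w2"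
  shows "(LBINT x=ereal 0..ereal K. 4 * cos ((K - \<bar>x\<bar>) * w1) * cos (x * w2)) = 2 * kern K (w1, w2)"
proof -
  have s1: "w1 + w2 \<noteq> 0" and s2: "w1 - w2 \<noteq> 0" using d1 d2 by auto
  define F where "F x = 2 * (- (sin (K * w1 - x * (w1 + w2)) / (w1 + w2)) - sin (K * w1 - x * (w1 - w2)) / (w1 - w2))" for x
  have d: "((\<lambda>x. sin (K * w1 - x * a) / a) has_real_derivative - cos (K * w1 - x * a)) (at x)" if "a \<noteq> 0" for a x
    using that by (auto intro!: derivative_eq_intros)
  have "(LBINT x=ereal 0..ereal K. 4 * cos ((K - \<bar>x\<bar>) * w1) * cos (x * w2)) = F K - F 0"
  proof (rule interval_integral_FTC_finite)
    show "continuous_on {min 0 K..max 0 K} (\<lambda>x. 4 * cos ((K - \<bar>x\<bar>) * w1) * cos (x * w2))"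
      by (intro continuous_intros)
    fix x assume x: "min 0 K \<le> x" "x \<le> max 0 K"
    then have x0: "0 \<le> x" using K by simp
    have "(F has_real_derivative 2 * (- (- cos (K * w1 - x * (w1 + w2))) - (- cos (K * w1 - x * (w1 - w2))))) (at x)"
      unfolding F_def by (intro DERIV_cmult DERIV_diff DERIV_minus d s1 s2)
    moreover have "2 * (- (- cos (K * w1 - x * (w1 + w2))) - (- cos (K * w1 - x * (w1 - w2)))) = 4 * cos ((K - \<bar>x\<bar>) * w1) * cos (x * w2)"
    proof -
      have "K * w1 - x * (w1 + w2) = (K - x) * w1 - x * w2" "K * w1 - x * (w1 - w2) = (K - x) * w1 + x * w2"
        by (simp_all add: algebra_simps)
      then show ?thesis using x0 by (simp add: cos_add cos_diff)
    qed
    ultimately show "(F has_vector_derivative 4 * cos ((K - \<bar>x\<bar>) * w1) * cos (x * w2)) (at x within {min 0 K..max 0 K})"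
      by (simp add: has_real_derivative_iff_has_vector_derivative[symmetric] has_field_derivative_at_within)
  qed
  also have "F K - F 0 = 2 * kern K (w1, w2)"
  proof -
    have "K * w1 - K * (w1 + w2) = - (K * w2)" "K * w1 - K * (w1 - w2) = K * w2" by (simp_all add: algebra_simps)
    then have "F K = 2 * (sin (K * w2) / (w1 + w2) - sin (K * w2) / (w1 - w2))" "F 0 = 2 * (- (sin (K * w1) / (w1 + w2)) - sin (K * w1) / (w1 - w2))"
      unfolding F_def by simp_all
    then show ?thesis unfolding kern_def by (simp add: diff_divide_distrib add_divide_distrib algebra_simps)
  qed
  finally show ?thesis .
qed

lemma J_eq:
  assumes K: "0 < K" and d1: "w1 \<noteq> w2" and d2: "w1 \<noteq> - w2"
  shows "(LINT x:{x. \<bar>x\<bar> < K}|lborel. phi K w1 w2 x) = 2 * complex_of_real (kern K (w1, w2))"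
proof -
  have S: "{x. \<bar>x\<bar> < K} = {real_of_ereal (ereal (-K)) <..< real_of_ereal (ereal K)}" by auto
  have "(LINT x:{x. \<bar>x\<bar> < K}|lborel. phi K w1 w2 x) = (LBINT x=ereal (-K)..ereal K. phi K w1 w2 x)"
    unfolding S using K by (subst interval_integral_Ioo) auto
  also have "\<dots> = (LBINT x=ereal (-K)..ereal 0. phi K w1 w2 x) + (LBINT x=ereal 0..ereal K. phi K w1 w2 x)"
  proof (rule interval_integral_sum[symmetric])
    have m1: "min (ereal (-K)) (min (ereal 0) (ereal K)) = ereal (-K)" and m2: "max (ereal (-K)) (max (ereal 0) (ereal K)) = ereal K"
      using K by (auto simp: min_def max_def)
    show "interval_lebesgue_integrable lborel (min (ereal (-K)) (min (ereal 0) (ereal K))) (max (ereal (-K)) (max (ereal 0) (ereal K))) (phi K w1 w2)"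
      unfolding m1 m2 by (intro interval_integrable_isCont phi_continuous)
  qed
  also have "(LBINT x=ereal (-K)..ereal 0. phi K w1 w2 x) = (LBINT x=ereal 0..ereal K. phi K w1 w2 (-x))"
    by (subst interval_integral_reflect) simp
  also have "(LBINT x=ereal 0..ereal K. phi K w1 w2 (-x)) + (LBINT x=ereal 0..ereal K. phi K w1 w2 x)
      = (LBINT x=ereal 0..ereal K. phi K w1 w2 (-x) + phi K w1 w2 x)"
  proof (rule interval_lebesgue_integral_add(2)[symmetric])
    show "interval_lebesgue_integrable lborel (ereal 0) (ereal K) (\<lambda>x. phi K w1 w2 (- x))"
      by (rule interval_integrable_isCont) (unfold phi_def, intro continuous_intros)
    show "interval_lebesgue_integrable lborel (ereal 0) (ereal K) (phi K w1 w2)"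
      by (rule interval_integrable_isCont) (rule phi_continuous)
  qed
  also have "\<dots> = (LBINT x=ereal 0..ereal K. complex_of_real (4 * cos ((K - \<bar>x\<bar>) * w1) * cos (x * w2)))"
    unfolding phi_sym ..
  also have "\<dots> = complex_of_real (LBINT x=ereal 0..ereal K. 4 * cos ((K - \<bar>x\<bar>) * w1) * cos (x * w2))"
    by (rule interval_lebesgue_integral_of_real)
  also have "\<dots> = 2 * complex_of_real (kern K (w1, w2))"
    using kern_FTC[OF K d1 d2] by simp
  finally show ?thesis .
qed

lemma lborel_pair_sf: "pair_sigma_finite (lborel::'a::euclidean_space measure) (lborel::'b::euclidean_space measure)"
  by (simp add: pair_sigma_finite_def sigma_finite_lborel)

lemma Psi_fubini:
  fixes \<theta> :: "real \<times> real \<Rightarrow> complex"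
  assumes \<theta>m[measurable]: "\<theta> \<in> borel_measurable borel" and \<theta>i: "integrable lborel \<theta>"
  shows "Psi \<theta> s k = complex_of_real (1 / (2 * pi) ^ 2) *
      (LINT w|lborel. LINT x2|lborel. indicator {x2. \<bar>x2\<bar> < \<bar>k\<bar>} x2 *\<^sub>R (\<theta> w * exp (\<i> * complex_of_real ((s * (\<bar>k\<bar> - \<bar>x2\<bar>), x2) \<bullet> w))))"
    and "integrable lborel (\<lambda>w. LINT x2|lborel. indicator {x2. \<bar>x2\<bar> < \<bar>k\<bar>} x2 *\<^sub>R (\<theta> w * exp (\<i> * complex_of_real ((s * (\<bar>k\<bar> - \<bar>x2\<bar>), x2) \<bullet> w))))"
proof -
  define S where "S = {x2::real. \<bar>x2\<bar> < \<bar>k\<bar>}"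
  have S_eq: "S = {-\<bar>k\<bar> <..< \<bar>k\<bar>}" unfolding S_def by auto
  have S_sets[measurable]: "S \<in> sets borel" unfolding S_eq by simp
  define F where "F x2 w = indicator S x2 *\<^sub>R (\<theta> w * exp (\<i> * complex_of_real ((s * (\<bar>k\<bar> - \<bar>x2\<bar>), x2) \<bullet> w)))" for x2 w
  have Fm: "case_prod F \<in> borel_measurable (lborel \<Otimes>\<^sub>M lborel)"
    unfolding F_def by measurable
  have Si: "integrable lborel (indicat_real S)"
    by (rule integrable_real_indicator) (auto simp: S_eq)
  have Fi: "integrable (lborel \<Otimes>\<^sub>M lborel) (case_prod F)"
  proof (rule Bochner_Integration.integrable_bound)
    show "integrable (lborel \<Otimes>\<^sub>M lborel) (\<lambda>z. indicat_real S (fst z) * norm (\<theta> (snd z)))"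
      by (rule integrable_mult_pair) (use Si \<theta>i in auto)
    show "case_prod F \<in> borel_measurable (lborel \<Otimes>\<^sub>M lborel)" by (rule Fm)
    show "AE z in lborel \<Otimes>\<^sub>M lborel. norm (case_prod F z) \<le> norm (indicat_real S (fst z) * norm (\<theta> (snd z)))"
      by (auto intro!: AE_I2 simp: F_def norm_mult indicator_def)
  qed
  have "Psi \<theta> s k = (LINT x2|lborel. complex_of_real (1 / (2 * pi) ^ 2) * (LINT w|lborel. F x2 w))"
    unfolding Psi_def inv_fourier2_def set_lebesgue_integral_def F_def S_def
    by (rule Bochner_Integration.integral_cong) (auto simp: indicator_def)
  also have "\<dots> = complex_of_real (1 / (2 * pi) ^ 2) * (LINT x2|lborel. (LINT w|lborel. F x2 w))"
    by (rule integral_mult_right_zero)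
  also have "(LINT x2|lborel. (LINT w|lborel. F x2 w)) = integral\<^sup>L (lborel \<Otimes>\<^sub>M lborel) (case_prod F)"
    using pair_sigma_finite.integral_fst'[OF lborel_pair_sf Fi] by simp
  also have "\<dots> = (LINT w|lborel. LINT x2|lborel. F x2 w)"
    using pair_sigma_finite.integral_snd[OF lborel_pair_sf Fi] by simp
  finally show "Psi \<theta> s k = complex_of_real (1 / (2 * pi) ^ 2) *
      (LINT w|lborel. LINT x2|lborel. indicator {x2. \<bar>x2\<bar> < \<bar>k\<bar>} x2 *\<^sub>R (\<theta> w * exp (\<i> * complex_of_real ((s * (\<bar>k\<bar> - \<bar>x2\<bar>), x2) \<bullet> w))))"
    unfolding F_def S_def .
  show "integrable lborel (\<lambda>w. LINT x2|lborel. indicator {x2. \<bar>x2\<bar> < \<bar>k\<bar>} x2 *\<^sub>R (\<theta> w * exp (\<i> * complex_of_real ((s * (\<bar>k\<bar> - \<bar>x2\<bar>), x2) \<bullet> w))))"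
    using pair_sigma_finite.integrable_snd[OF lborel_pair_sf Fi] unfolding F_def S_def by simp
qed

lemma AE_offdiag: "AE w in (lborel::(real \<times> real) measure). fst w \<noteq> snd w \<and> fst w \<noteq> - snd w"
proof -
  have "AE w in (lborel \<Otimes>\<^sub>M lborel :: (real \<times> real) measure). fst w \<noteq> snd w \<and> fst w \<noteq> - snd w"
    apply (rule pair_sigma_finite.AE_pair_measure[OF lborel_pair_sf])
    subgoal
    proof -
      have "open {x::real\<times>real. fst x \<noteq> snd x \<and> fst x \<noteq> - snd x}"
        by (intro open_Collect_conj open_Collect_neq continuous_intros)
      then show ?thesis unfolding lborel_prod by simp
    qed
    apply (rule AE_I2)
    subgoal for x
      using AE_lborel_singleton[of x] AE_lborel_singleton[of "- x"] by eventually_elim auto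
    done
  then show ?thesis unfolding lborel_prod .
qed

lemma E_integrable:
  "integrable lborel (\<lambda>x2. indicator {x2::real. \<bar>x2\<bar> < K} x2 *\<^sub>R exp (\<i> * complex_of_real (f x2)))"
  if [measurable]: "f \<in> borel_measurable borel" for f
proof (rule Bochner_Integration.integrable_bound)
  show "integrable lborel (indicat_real {-K<..<K})" using emeasure_bounded_finite[of "{-K<..<K}"] by (intro integrable_real_indicator) auto
  show "(\<lambda>x2. indicator {x2::real. \<bar>x2\<bar> < K} x2 *\<^sub>R exp (\<i> * complex_of_real (f x2))) \<in> borel_measurable lborel"
    by measurable
  show "AE x in lborel. norm (indicator {x2::real. \<bar>x2\<bar> < K} x *\<^sub>R exp (\<i> * complex_of_real (f x))) \<le> norm (indicat_real {-K<..<K} x)"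
    by (auto intro!: AE_I2 simp: indicator_def abs_less_iff)
qed

lemma LHS_eq:
  fixes \<theta> :: "real \<times> real \<Rightarrow> complex"
  assumes \<theta>m[measurable]: "\<theta> \<in> borel_measurable borel" and \<theta>i: "integrable lborel \<theta>" and k: "k \<noteq> 0"
  shows "Psi \<theta> 1 k + Psi \<theta> (-1) k = complex_of_real (1 / (2 * pi ^ 2)) * (LINT w|lborel. \<theta> w * complex_of_real (kern \<bar>k\<bar> w))"
proof -
  define K where "K = \<bar>k\<bar>"
  have K: "0 < K" using k unfolding K_def by simp
  define G where "G s w = (LINT x2|lborel. indicator {x2. \<bar>x2\<bar> < \<bar>k\<bar>} x2 *\<^sub>R (\<theta> w * exp (\<i> * complex_of_real ((s * (\<bar>k\<bar> - \<bar>x2\<bar>), x2) \<bullet> w))))" for s w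
  have P1: "Psi \<theta> 1 k = complex_of_real (1 / (2 * pi) ^ 2) * integral\<^sup>L lborel (G 1)"
    and I1: "integrable lborel (G 1)"
    using Psi_fubini[OF \<theta>m \<theta>i, where s=1 and k=k] unfolding G_def by auto
  have P2: "Psi \<theta> (-1) k = complex_of_real (1 / (2 * pi) ^ 2) * integral\<^sup>L lborel (G (-1))"
    and I2: "integrable lborel (G (-1))"
    using Psi_fubini[OF \<theta>m \<theta>i, where s="-1" and k=k] unfolding G_def by auto
  have "Psi \<theta> 1 k + Psi \<theta> (-1) k = complex_of_real (1 / (2 * pi) ^ 2) * (LINT w|lborel. G 1 w + G (-1) w)"
    unfolding P1 P2 Bochner_Integration.integral_add[OF I1 I2] by (simp add: distrib_left)
  also have "(LINT w|lborel. G 1 w + G (-1) w) = (LINT w|lborel. 2 * (\<theta> w * complex_of_real (kern K w)))"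
  proof (rule integral_cong_AE)
    show "(\<lambda>w. G 1 w + G (- 1) w) \<in> borel_measurable lborel" using I1 I2 by auto
    show "(\<lambda>w. 2 * (\<theta> w * complex_of_real (kern K w))) \<in> borel_measurable lborel"
      by measurable
    show "AE w in lborel. G 1 w + G (- 1) w = 2 * (\<theta> w * complex_of_real (kern K w))"
      using AE_offdiag
    proof eventually_elim
      fix w :: "real \<times> real" assume w: "fst w \<noteq> snd w \<and> fst w \<noteq> - snd w"
      obtain w1 w2 where ww: "w = (w1, w2)" by force
      have d1: "w1 \<noteq> w2" and d2: "w1 \<noteq> - w2" using w ww by auto
      let ?E1 = "\<lambda>x2. indicator {x2::real. \<bar>x2\<bar> < K} x2 *\<^sub>R exp (\<i> * complex_of_real ((K - \<bar>x2\<bar>) * w1 + x2 * w2))"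
      let ?E2 = "\<lambda>x2. indicator {x2::real. \<bar>x2\<bar> < K} x2 *\<^sub>R exp (\<i> * complex_of_real (- ((K - \<bar>x2\<bar>) * w1) + x2 * w2))"
      have g1: "G 1 w = \<theta> w * (LINT x2|lborel. ?E1 x2)"
        unfolding G_def ww K_def[symmetric] integral_mult_right_zero[symmetric]
        by (rule Bochner_Integration.integral_cong) (auto simp: indicator_def)
      have g2: "G (-1) w = \<theta> w * (LINT x2|lborel. ?E2 x2)"
        unfolding G_def ww K_def[symmetric] integral_mult_right_zero[symmetric]
        by (rule Bochner_Integration.integral_cong) (auto simp: indicator_def algebra_simps)
      have "(LINT x2|lborel. ?E1 x2) + (LINT x2|lborel. ?E2 x2) = (LINT x2|lborel. ?E1 x2 + ?E2 x2)"
        by (rule Bochner_Integration.integral_add[symmetric]) (intro E_integrable; measurable)+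
      also have "\<dots> = (LINT x:{x. \<bar>x\<bar> < K}|lborel. phi K w1 w2 x)"
        unfolding set_lebesgue_integral_def phi_def
        by (rule Bochner_Integration.integral_cong) (auto simp: indicator_def)
      also have "\<dots> = 2 * complex_of_real (kern K (w1, w2))"
        by (rule J_eq[OF K d1 d2])
      finally show "G 1 w + G (- 1) w = 2 * (\<theta> w * complex_of_real (kern K w))"
        using g1 g2 ww by (simp add: distrib_left[symmetric])
    qed
  qed
  also have "\<dots> = 2 * (LINT w|lborel. \<theta> w * complex_of_real (kern K w))"
    by (rule integral_mult_right_zero)
  finally show ?thesis unfolding K_def by (simp add: power2_eq_square field_simps)
qed

definition Geps :: "(real \<times> real \<Rightarrow> complex) \<Rightarrow> real \<Rightarrow> real \<Rightarrow> real \<times> real \<Rightarrow> complex" where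
  "Geps \<theta> K e w = complex_of_real (sin (fst w * K)) *
     ((if e < \<bar>snd w - - fst w\<bar> then \<theta> w / complex_of_real (snd w - - fst w) else 0) -
      (if e < \<bar>snd w - fst w\<bar> then \<theta> w / complex_of_real (snd w - fst w) else 0))"

lemma sepform_measurable_pair[measurable]:
  "sepform I a b \<theta> \<Longrightarrow> \<theta> \<in> borel_measurable (lborel \<Otimes>\<^sub>M lborel)"
  using sepform_measurable[of I a b \<theta>] by (simp add: lborel_prod)

lemma sepform_integrable_pair:
  "sepform I a b \<theta> \<Longrightarrow> integrable (lborel \<Otimes>\<^sub>M lborel) \<theta>"
  using sepform_integrable[of I a b \<theta>] by (simp add: lborel_prod)

lemma Geps_integrable:
  assumes s: "sepform I a b \<theta>" and e: "0 < e"
  shows "integrable (lborel \<Otimes>\<^sub>M lborel) (Geps \<theta> K e)"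
proof (rule Bochner_Integration.integrable_bound)
  show "integrable (lborel \<Otimes>\<^sub>M lborel) (\<lambda>w. (2 / e) * norm (\<theta> w))"
    using sepform_integrable_pair[OF s] by (intro integrable_mult_right integrable_norm)
  have [measurable]: "\<theta> \<in> borel_measurable (lborel \<Otimes>\<^sub>M lborel)" using s by measurable
  show "Geps \<theta> K e \<in> borel_measurable (lborel \<Otimes>\<^sub>M lborel)"
    unfolding Geps_def by measurable
  show "AE w in lborel \<Otimes>\<^sub>M lborel. norm (Geps \<theta> K e w) \<le> norm (2 / e * norm (\<theta> w))"
  proof (rule AE_I2)
    fix w :: "real \<times> real"
    have q: "norm (if e < \<bar>c\<bar> then \<theta> w / complex_of_real c else 0) \<le> norm (\<theta> w) / e" for c
    proof (cases "e < \<bar>c\<bar>")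
      case True
      then have "norm (\<theta> w / complex_of_real c) = norm (\<theta> w) / \<bar>c\<bar>" by (simp add: norm_divide)
      also have "\<dots> \<le> norm (\<theta> w) / e" using True e by (intro divide_left_mono) auto
      finally show ?thesis using True by simp
    qed (use e in auto)
    have "norm (Geps \<theta> K e w) \<le> 1 * (norm (\<theta> w) / e + norm (\<theta> w) / e)"
      unfolding Geps_def norm_mult
      by (intro mult_mono order_trans[OF norm_triangle_ineq4] add_mono q) (auto simp del: of_real_diff)
    then show "norm (Geps \<theta> K e w) \<le> norm (2 / e * norm (\<theta> w))" using e by simp
  qed
qed

lemma Geps_inner:
  assumes s: "sepform I a b \<theta>" and e: "0 < e"
  shows "(LINT y|lborel. Geps \<theta> K e (x, y)) =
    complex_of_real (sin (x * K)) * (trunc (\<lambda>y. \<theta> (x, y)) e (- x) - trunc (\<lambda>y. \<theta> (x, y)) e x)"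
proof -
  have n: "nice (\<lambda>y. \<theta> (x, y))" by (rule sepform_slice[OF s])
  let ?A = "\<lambda>y. indicat_real {w. e < \<bar>w - - x\<bar>} y *\<^sub>R (\<theta> (x, y) / complex_of_real (y - - x))"
  let ?B = "\<lambda>y. indicat_real {w. e < \<bar>w - x\<bar>} y *\<^sub>R (\<theta> (x, y) / complex_of_real (y - x))"
  have iA: "integrable lborel ?A" using trunc_integrable[OF n e, of "-x"] unfolding set_integrable_def .
  have iB: "integrable lborel ?B" using trunc_integrable[OF n e, of x] unfolding set_integrable_def .
  have "(LINT y|lborel. Geps \<theta> K e (x, y)) = (LINT y|lborel. complex_of_real (sin (x * K)) * (?A y - ?B y))"
    unfolding Geps_def by (rule Bochner_Integration.integral_cong) (auto simp: indicator_def simp del: of_real_diff)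
  also have "\<dots> = complex_of_real (sin (x * K)) * ((LINT y|lborel. ?A y) - (LINT y|lborel. ?B y))"
    by (simp only: integral_mult_right_zero Bochner_Integration.integral_diff[OF iA iB])
  also have "\<dots> = complex_of_real (sin (x * K)) * (trunc (\<lambda>y. \<theta> (x, y)) e (- x) - trunc (\<lambda>y. \<theta> (x, y)) e x)"
    unfolding trunc_def set_lebesgue_integral_def ..
  finally show ?thesis .
qed

lemma Geps_fubini:
  assumes s: "sepform I a b \<theta>" and e: "0 < e"
  shows "integral\<^sup>L (lborel \<Otimes>\<^sub>M lborel) (Geps \<theta> K e) =
      (LINT x|lborel. complex_of_real (sin (x * K)) * (trunc (\<lambda>y. \<theta> (x, y)) e (- x) - trunc (\<lambda>y. \<theta> (x, y)) e x))"
    and "integrable lborel (\<lambda>x. complex_of_real (sin (x * K)) * (trunc (\<lambda>y. \<theta> (x, y)) e (- x) - trunc (\<lambda>y. \<theta> (x, y)) e x))"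
proof -
  have i: "integrable (lborel \<Otimes>\<^sub>M lborel) (Geps \<theta> K e)" by (rule Geps_integrable[OF s e])
  show "integral\<^sup>L (lborel \<Otimes>\<^sub>M lborel) (Geps \<theta> K e) =
      (LINT x|lborel. complex_of_real (sin (x * K)) * (trunc (\<lambda>y. \<theta> (x, y)) e (- x) - trunc (\<lambda>y. \<theta> (x, y)) e x))"
    using pair_sigma_finite.integral_fst'[OF lborel_pair_sf i] by (simp add: Geps_inner[OF s e])
  show "integrable lborel (\<lambda>x. complex_of_real (sin (x * K)) * (trunc (\<lambda>y. \<theta> (x, y)) e (- x) - trunc (\<lambda>y. \<theta> (x, y)) e x))"
    using pair_sigma_finite.integrable_fst'[OF lborel_pair_sf i] by (simp add: Geps_inner[OF s e])
qed

lemma R1_lim: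
  assumes s: "sepform I a b \<theta>"
  shows "(\<lambda>n. integral\<^sup>L (lborel \<Otimes>\<^sub>M lborel) (Geps \<theta> K (inverse (real (Suc n))))) \<longlonglongrightarrow>
     (LINT x|lborel. complex_of_real (sin (x * K)) * (PV (\<lambda>y. \<theta> (x, y)) (- x) - PV (\<lambda>y. \<theta> (x, y)) x))"
proof -
  define en where "en n = inverse (real (Suc n))" for n
  have en: "0 < en n" for n unfolding en_def by simp
  have enlim: "filterlim en (at_right 0) sequentially"
    unfolding en_def by (rule tendsto_imp_filterlim_at_right[OF LIMSEQ_inverse_real_of_nat]) simp
  define Sf where "Sf n x = complex_of_real (sin (x * K)) * (trunc (\<lambda>y. \<theta> (x, y)) (en n) (- x) - trunc (\<lambda>y. \<theta> (x, y)) (en n) x)" for n x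
  define f where "f x = complex_of_real (sin (x * K)) * (PV (\<lambda>y. \<theta> (x, y)) (- x) - PV (\<lambda>y. \<theta> (x, y)) x)" for x
  have Si: "integrable lborel (Sf n)" for n
    unfolding Sf_def by (rule Geps_fubini(2)[OF s en])
  have Seq: "integral\<^sup>L (lborel \<Otimes>\<^sub>M lborel) (Geps \<theta> K (en n)) = integral\<^sup>L lborel (Sf n)" for n
    unfolding Sf_def by (rule Geps_fubini(1)[OF s en])
  have lim: "(\<lambda>n. Sf n x) \<longlonglongrightarrow> f x" for x
  proof -
    have n: "nice (\<lambda>y. \<theta> (x, y))" by (rule sepform_slice[OF s])
    have "(\<lambda>n. trunc (\<lambda>y. \<theta> (x, y)) (en n) c) \<longlonglongrightarrow> PV (\<lambda>y. \<theta> (x, y)) c" for c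
      by (rule filterlim_compose[OF trunc_tendsto[OF n] enlim])
    then show ?thesis unfolding Sf_def f_def by (intro tendsto_intros)
  qed
  have I: "finite I" and nb: "\<And>i. i \<in> I \<Longrightarrow> nice (b i)" and na: "\<And>i. i \<in> I \<Longrightarrow> nice (a i)"
    and th: "\<And>x y. \<theta> (x, y) = (\<Sum>i\<in>I. a i x * b i y)"
    using s unfolding sepform_def by auto
  have "\<forall>i\<in>I. \<exists>B. \<forall>e c. 0 < e \<longrightarrow> norm (trunc (b i) e c) \<le> B" using trunc_bound nb by blast
  then obtain B where B: "\<And>i e c. i \<in> I \<Longrightarrow> 0 < e \<Longrightarrow> norm (trunc (b i) e c) \<le> B i"
    by metis
  define W where "W x = (\<Sum>i\<in>I. norm (a i x) * (2 * B i))" for x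
  have Wi: "integrable lborel W"
    unfolding W_def using na by (intro Bochner_Integration.integrable_sum integrable_mult_left integrable_norm nice_integrable) auto
  have bound: "norm (Sf n x) \<le> W x" for n x
  proof -
    have tr: "trunc (\<lambda>y. \<theta> (x, y)) (en n) c = (\<Sum>i\<in>I. a i x * trunc (b i) (en n) c)" for c
      unfolding th by (rule trunc_sum[OF I nb en])
    have "Sf n x = complex_of_real (sin (x * K)) * (\<Sum>i\<in>I. a i x * (trunc (b i) (en n) (- x) - trunc (b i) (en n) x))"
      unfolding Sf_def tr by (simp add: sum_subtractf right_diff_distrib)
    also have "norm \<dots> \<le> 1 * (\<Sum>i\<in>I. norm (a i x) * (2 * B i))"
      unfolding norm_mult
    proof (intro mult_mono order_trans[OF norm_sum] sum_mono)
      fix i assume i: "i \<in> I"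
      have "norm (trunc (b i) (en n) (- x) - trunc (b i) (en n) x) \<le> B i + B i"
        using B[OF i en[of n], where c="-x"] B[OF i en[of n], where c=x] norm_triangle_ineq4 by (smt (verit))
      then show "norm (a i x * (trunc (b i) (en n) (- x) - trunc (b i) (en n) x)) \<le> norm (a i x) * (2 * B i)"
        unfolding norm_mult by (intro mult_left_mono) auto
    qed (auto intro: sum_nonneg)
    finally show ?thesis unfolding W_def by simp
  qed
  have fm: "f \<in> borel_measurable lborel"
    by (rule borel_measurable_LIMSEQ_metric[of Sf]) (use Si lim in auto)
  have "(\<lambda>n. integral\<^sup>L lborel (Sf n)) \<longlonglongrightarrow> integral\<^sup>L lborel f"
    by (rule integral_dominated_convergence[where w=W]) (use fm Si Wi lim bound in auto)
  then show ?thesis unfolding Seq[unfolded en_def, symmetric] f_def en_def .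
qed


lemma sin_lip: "\<bar>sin a - sin b\<bar> \<le> \<bar>a - b\<bar>" for a b :: real
proof -
  have e: "\<bar>sin a - sin b\<bar> = 2 * \<bar>sin ((a - b) / 2)\<bar> * \<bar>cos ((a + b) / 2)\<bar>"
    by (simp only: sin_diff_sin abs_mult abs_numeral)
  have s: "\<bar>sin ((a - b) / 2)\<bar> \<le> \<bar>(a - b) / 2\<bar>" by (rule abs_sin_x_le_abs_x)
  have c: "\<bar>cos ((a + b) / 2)\<bar> \<le> 1" by (rule abs_cos_le_one)
  have "2 * \<bar>sin ((a - b) / 2)\<bar> * \<bar>cos ((a + b) / 2)\<bar> \<le> 2 * \<bar>(a - b) / 2\<bar> * 1"
    by (intro mult_mono mult_left_mono s c) auto
  then show ?thesis unfolding e by simp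
qed
lemma sin_quot_bound: "K \<ge> 0 \<Longrightarrow> \<bar>(sin (K * x) - sin (K * y)) / (x - y)\<bar> \<le> K" for K x y :: real
proof (cases "x = y")
  case False
  assume K: "K \<ge> 0"
  have kk0: "K * x - K * y = K * (x - y)" by (simp add: right_diff_distrib)
  have kk1: "\<bar>K * (x - y)\<bar> = K * \<bar>x - y\<bar>" by (rule trans[OF abs_mult]) (simp add: K)
  have kk: "\<bar>K * x - K * y\<bar> = K * \<bar>x - y\<bar>" by (simp only: kk0 kk1)
  have le: "\<bar>sin (K * x) - sin (K * y)\<bar> \<le> K * \<bar>x - y\<bar>"
    using sin_lip[of "K * x" "K * y"] unfolding kk .
  have pos: "0 < \<bar>x - y\<bar>" using False by simp
  have "\<bar>(sin (K * x) - sin (K * y)) / (x - y)\<bar> = \<bar>sin (K * x) - sin (K * y)\<bar> / \<bar>x - y\<bar>"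
    by (rule abs_divide)
  also have "\<dots> \<le> K" using le by (simp only: pos_divide_le_eq[OF pos])
  finally show ?thesis .
qed simp


definition kerne :: "real \<Rightarrow> real \<Rightarrow> real \<times> real \<Rightarrow> real" where
  "kerne K e w = (if e < \<bar>fst w - snd w\<bar> then (sin (K * fst w) - sin (K * snd w)) / (fst w - snd w) else 0) +
     (if e < \<bar>fst w + snd w\<bar> then (sin (K * fst w) + sin (K * snd w)) / (fst w + snd w) else 0)"

lemma kerne_bound: "K \<ge> 0 \<Longrightarrow> \<bar>kerne K e w\<bar> \<le> 2 * K"
proof -
  assume K: "K \<ge> 0"
  have a: "\<bar>(sin (K * fst w) - sin (K * snd w)) / (fst w - snd w)\<bar> \<le> K" by (rule sin_quot_bound[OF K])
  have b: "\<bar>(sin (K * fst w) + sin (K * snd w)) / (fst w + snd w)\<bar> \<le> K"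
    using sin_quot_bound[OF K, of "fst w" "- snd w"] by simp
  let ?P = "if e < \<bar>fst w - snd w\<bar> then (sin (K * fst w) - sin (K * snd w)) / (fst w - snd w) else 0"
  let ?Q = "if e < \<bar>fst w + snd w\<bar> then (sin (K * fst w) + sin (K * snd w)) / (fst w + snd w) else 0"
  have a': "\<bar>?P\<bar> \<le> K" using a K by auto
  have b': "\<bar>?Q\<bar> \<le> K" using b K by auto
  have "\<bar>?P + ?Q\<bar> \<le> \<bar>?P\<bar> + \<bar>?Q\<bar>" by (rule abs_triangle_ineq)
  then show ?thesis unfolding kerne_def using a' b' by linarith
qed

lemma kerne_lim:
  assumes e: "en \<longlonglongrightarrow> 0"
  shows "(\<lambda>n. kerne K (en n) w) \<longlonglongrightarrow> kern K w"
proof -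
  have ev: "\<forall>\<^sub>F n in sequentially. (if en n < \<bar>d\<bar> then q / d else 0) = q / d" for d q :: real
  proof (cases "d = 0")
    case True then show ?thesis by simp
  next
    case False
    have "\<forall>\<^sub>F n in sequentially. en n < \<bar>d\<bar>"
      using order_tendstoD(2)[OF e, of "\<bar>d\<bar>"] False by simp
    then show ?thesis by eventually_elim simp
  qed
  have "\<forall>\<^sub>F n in sequentially. kerne K (en n) w = kern K w"
    using ev[of "fst w - snd w" "sin (K * fst w) - sin (K * snd w)"] ev[of "fst w + snd w" "sin (K * fst w) + sin (K * snd w)"]
    by eventually_elim (simp add: kerne_def kern_def)
  then show ?thesis by (rule tendsto_eventually)
qed

lemma kerne_measurable[measurable]: "kerne K e \<in> borel_measurable (lborel \<Otimes>\<^sub>M lborel)"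
  unfolding kerne_def by measurable

lemma ifmul_c: "(if P then x / y else 0) = complex_of_real (if P then 1 else 0) * (x * inverse y)" for x y :: complex
  by (simp add: divide_inverse)

lemma ifmul_r: "(if P then x / y else 0) = (if P then 1 else 0) * (x * inverse y)" for x y :: real
  by (simp add: divide_inverse)

lemma Geps_sum:
  "Geps \<theta> K e w + Geps (\<lambda>(x, y). \<theta> (y, x)) K e (snd w, fst w) = \<theta> w * complex_of_real (kerne K e w)"
proof -
  obtain w1 w2 where w: "w = (w1, w2)" by force
  define p where "p = (if e < \<bar>w1 + w2\<bar> then 1 else (0::real))"
  define q where "q = (if e < \<bar>w1 - w2\<bar> then 1 else (0::real))"
  define A where "A = inverse (w1 + w2)"
  define B where "B = inverse (w1 - w2)"
  have g1: "w2 - - w1 = w1 + w2" "w1 - - w2 = w1 + w2" "w2 - w1 = - (w1 - w2)" by simp_all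
  have f1: "complex_of_real (if e < \<bar>w2 - - w1\<bar> then 1 else 0) = complex_of_real p"
    "complex_of_real (if e < \<bar>w1 - - w2\<bar> then 1 else 0) = complex_of_real p"
    "complex_of_real (if e < \<bar>w2 - w1\<bar> then 1 else 0) = complex_of_real q"
    "complex_of_real (if e < \<bar>w1 - w2\<bar> then 1 else 0) = complex_of_real q"
    unfolding p_def q_def g1 abs_minus_cancel by (rule refl)+
  have f2: "inverse (complex_of_real (w2 - - w1)) = complex_of_real A"
    "inverse (complex_of_real (w1 - - w2)) = complex_of_real A"
    "inverse (complex_of_real (w2 - w1)) = - complex_of_real B"
    "inverse (complex_of_real (w1 - w2)) = complex_of_real B"
    unfolding A_def B_def g1 by (simp_all only: of_real_minus inverse_minus_eq of_real_inverse)
  have f3: "(if e < \<bar>w1 - w2\<bar> then 1 else 0) = q" "(if e < \<bar>w1 + w2\<bar> then 1 else 0) = p"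
    "inverse (w1 - w2) = B" "inverse (w1 + w2) = A"
    unfolding p_def q_def A_def B_def by (rule refl)+
  show ?thesis
    unfolding Geps_def kerne_def w fst_conv snd_conv case_prod_conv ifmul_c ifmul_r f1 f2 f3
    by (simp only: mult.commute[of K] of_real_mult of_real_add of_real_diff) (simp add: algebra_simps)
qed




lemma sep_even_sepform:
  assumes "\<theta> \<in> sep_even_schwartz"
  shows "\<exists>I (a :: nat \<times> bool \<Rightarrow> real \<Rightarrow> complex) b. sepform I a b \<theta>"
proof -
  obtain n :: nat and c \<phi>1 \<phi>2 where sch0: "\<forall>i<n. schwartz (\<phi>1 i) \<and> schwartz (\<phi>2 i)"
    and th0: "\<forall>w1 w2. \<theta> (w1, w2) = (\<Sum>i<n. c i * (\<phi>1 i w1 * \<phi>2 i w2 + \<phi>1 i (-w1) * \<phi>2 i (-w2)))"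
    using assms unfolding sep_even_schwartz_def mem_Collect_eq by blast
  have sch: "\<And>i. i < n \<Longrightarrow> schwartz (\<phi>1 i) \<and> schwartz (\<phi>2 i)" using sch0 by blast
  have th: "\<And>w1 w2. \<theta> (w1, w2) = (\<Sum>i<n. c i * (\<phi>1 i w1 * \<phi>2 i w2 + \<phi>1 i (-w1) * \<phi>2 i (-w2)))" using th0 by blast
  define I where "I = {..<n} \<times> (UNIV :: bool set)"
  define a where "a = (\<lambda>(i, t) x. if t then c i * \<phi>1 i x else c i * \<phi>1 i (-x))"
  define b where "b = (\<lambda>(i, t) y. if t then \<phi>2 i y else \<phi>2 i (-y))"
  have "sepform I a b \<theta>"
    unfolding sepform_def
  proof (intro conjI)
    show "finite I" unfolding I_def by simp
    show "\<forall>it\<in>I. nice (a it) \<and> nice (b it)"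
    proof
      fix it assume it: "it \<in> I"
      obtain i t where itd: "it = (i, t)" by force
      have i: "i < n" using it itd unfolding I_def by auto
      have n1: "nice (\<phi>1 i)" and n2: "nice (\<phi>2 i)" using sch[OF i] schwartz_nice by auto
      show "nice (a it) \<and> nice (b it)"
        unfolding itd a_def b_def
        by (cases t) (auto intro!: nice_cmult nice_reflect n1 n2 nice_cmult[OF nice_reflect[OF n1]])
    qed
    show "\<forall>x y. \<theta> (x, y) = (\<Sum>it\<in>I. a it x * b it y)"
    proof (intro allI)
      fix x y
      have "(\<Sum>it\<in>I. a it x * b it y) = (\<Sum>i<n. \<Sum>t\<in>(UNIV :: bool set). a (i, t) x * b (i, t) y)"
        unfolding I_def by (simp add: sum.cartesian_product case_prod_unfold)
      also have "\<dots> = (\<Sum>i<n. c i * (\<phi>1 i x * \<phi>2 i y + \<phi>1 i (-x) * \<phi>2 i (-y)))"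
        by (intro sum.cong refl) (simp add: UNIV_bool a_def b_def algebra_simps)
      finally show "\<theta> (x, y) = (\<Sum>it\<in>I. a it x * b it y)" using th by simp
    qed
  qed
  then show ?thesis by blast
qed

theorem mainTheorem18:
  fixes \<theta> :: "real \<times> real \<Rightarrow> complex" and k :: real
  assumes "\<theta> \<in> sep_even_schwartz"
  shows "Psi \<theta> 1 k + Psi \<theta> (-1) k =
    complex_of_real (1 / (2 * pi ^ 2)) *
      (LINT w1|lborel. complex_of_real (sin (w1 * \<bar>k\<bar>)) *
         (PV (\<lambda>w2. \<theta> (w1, w2)) (- w1) - PV (\<lambda>w2. \<theta> (w1, w2)) w1))
  + complex_of_real (1 / (2 * pi ^ 2)) *
      (LINT w2|lborel. complex_of_real (sin (w2 * \<bar>k\<bar>)) *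
         (PV (\<lambda>w1. \<theta> (w1, w2)) (- w2) - PV (\<lambda>w1. \<theta> (w1, w2)) w2))"
proof (cases "k = 0")
  case True
  then show ?thesis by (simp add: Psi_def set_lebesgue_integral_def)
next
  case False
  obtain I and a :: "nat \<times> bool \<Rightarrow> real \<Rightarrow> complex" and b where s: "sepform I a b \<theta>"
    using sep_even_sepform[OF assms] by blast
  define K where "K = \<bar>k\<bar>"
  have K: "0 < K" using False unfolding K_def by simp
  define \<theta>' where "\<theta>' = (\<lambda>(x, y). \<theta> (y, x))"
  have s': "sepform I b a \<theta>'" unfolding \<theta>'_def by (rule sepform_swap[OF s])
  define en where "en n = inverse (real (Suc n))" for n
  have en: "0 < en n" for n unfolding en_def by simp
  have en0: "en \<longlonglongrightarrow> 0" unfolding en_def by (rule LIMSEQ_inverse_real_of_nat)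
  define R1 where "R1 = (LINT x|lborel. complex_of_real (sin (x * K)) * (PV (\<lambda>y. \<theta> (x, y)) (- x) - PV (\<lambda>y. \<theta> (x, y)) x))"
  define R2 where "R2 = (LINT x|lborel. complex_of_real (sin (x * K)) * (PV (\<lambda>y. \<theta>' (x, y)) (- x) - PV (\<lambda>y. \<theta>' (x, y)) x))"
  have L1: "(\<lambda>n. integral\<^sup>L (lborel \<Otimes>\<^sub>M lborel) (Geps \<theta> K (en n))) \<longlonglongrightarrow> R1"
    unfolding R1_def en_def by (rule R1_lim[OF s])
  have L2: "(\<lambda>n. integral\<^sup>L (lborel \<Otimes>\<^sub>M lborel) (Geps \<theta>' K (en n))) \<longlonglongrightarrow> R2"
    unfolding R2_def en_def by (rule R1_lim[OF s'])
  have m[measurable]: "\<theta> \<in> borel_measurable (lborel \<Otimes>\<^sub>M lborel)" by (rule sepform_measurable_pair[OF s])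
  have ti: "integrable (lborel \<Otimes>\<^sub>M lborel) \<theta>" by (rule sepform_integrable_pair[OF s])
  have sum_eq: "integral\<^sup>L (lborel \<Otimes>\<^sub>M lborel) (Geps \<theta> K e) + integral\<^sup>L (lborel \<Otimes>\<^sub>M lborel) (Geps \<theta>' K e)
      = (LINT w|(lborel \<Otimes>\<^sub>M lborel). \<theta> w * complex_of_real (kerne K e w))" if e: "0 < e" for e
  proof -
    have i1: "integrable (lborel \<Otimes>\<^sub>M lborel) (Geps \<theta> K e)" by (rule Geps_integrable[OF s e])
    have i2: "integrable (lborel \<Otimes>\<^sub>M lborel) (Geps \<theta>' K e)" by (rule Geps_integrable[OF s' e])
    have i2': "integrable (lborel \<Otimes>\<^sub>M lborel) (\<lambda>(x, y). Geps \<theta>' K e (y, x))"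
      using pair_sigma_finite.integrable_product_swap[OF lborel_pair_sf i2] .
    have "integral\<^sup>L (lborel \<Otimes>\<^sub>M lborel) (Geps \<theta>' K e) = integral\<^sup>L (lborel \<Otimes>\<^sub>M lborel) (\<lambda>(x, y). Geps \<theta>' K e (y, x))"
      using pair_sigma_finite.integral_product_swap[OF lborel_pair_sf borel_measurable_integrable[OF i2]] by simp
    then have "integral\<^sup>L (lborel \<Otimes>\<^sub>M lborel) (Geps \<theta> K e) + integral\<^sup>L (lborel \<Otimes>\<^sub>M lborel) (Geps \<theta>' K e)
      = (LINT w|(lborel \<Otimes>\<^sub>M lborel). Geps \<theta> K e w + (\<lambda>(x, y). Geps \<theta>' K e (y, x)) w)"
      using Bochner_Integration.integral_add[OF i1 i2'] by simp
    also have "\<dots> = (LINT w|(lborel \<Otimes>\<^sub>M lborel). \<theta> w * complex_of_real (kerne K e w))"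
    proof (rule Bochner_Integration.integral_cong)
      fix w :: "real \<times> real"
      show "Geps \<theta> K e w + (\<lambda>(x, y). Geps \<theta>' K e (y, x)) w = \<theta> w * complex_of_real (kerne K e w)"
        using Geps_sum[of \<theta> K e w] by (cases w) (simp add: \<theta>'_def)
    qed simp
    finally show ?thesis .
  qed
  have L3: "(\<lambda>n. LINT w|(lborel \<Otimes>\<^sub>M lborel). \<theta> w * complex_of_real (kerne K (en n) w))
      \<longlonglongrightarrow> (LINT w|(lborel \<Otimes>\<^sub>M lborel). \<theta> w * complex_of_real (kern K w))"
  proof (rule integral_dominated_convergence[where w="\<lambda>w. 2 * K * norm (\<theta> w)"])
    show "(\<lambda>w. \<theta> w * complex_of_real (kern K w)) \<in> borel_measurable (lborel \<Otimes>\<^sub>M lborel)"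
      using sepform_measurable[OF s] by (simp add: lborel_prod) measurable
    show "(\<lambda>w. \<theta> w * complex_of_real (kerne K (en n) w)) \<in> borel_measurable (lborel \<Otimes>\<^sub>M lborel)" for n
      by measurable
    show "integrable (lborel \<Otimes>\<^sub>M lborel) (\<lambda>w. 2 * K * norm (\<theta> w))"
      using ti by (intro integrable_mult_right integrable_norm)
    show "AE w in lborel \<Otimes>\<^sub>M lborel. (\<lambda>n. \<theta> w * complex_of_real (kerne K (en n) w)) \<longlonglongrightarrow> \<theta> w * complex_of_real (kern K w)"
      by (intro AE_I2 tendsto_intros kerne_lim[OF en0])
    show "AE w in lborel \<Otimes>\<^sub>M lborel. norm (\<theta> w * complex_of_real (kerne K (en n) w)) \<le> 2 * K * norm (\<theta> w)" for n
    proof (rule AE_I2)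
      fix w
      have "norm (\<theta> w * complex_of_real (kerne K (en n) w)) = norm (\<theta> w) * \<bar>kerne K (en n) w\<bar>"
        by (simp add: norm_mult)
      also have "\<dots> \<le> norm (\<theta> w) * (2 * K)" using kerne_bound[of K "en n" w] K by (intro mult_left_mono) auto
      finally show "norm (\<theta> w * complex_of_real (kerne K (en n) w)) \<le> 2 * K * norm (\<theta> w)" by (simp add: mult.commute)
    qed
  qed
  have "(\<lambda>n. integral\<^sup>L (lborel \<Otimes>\<^sub>M lborel) (Geps \<theta> K (en n)) + integral\<^sup>L (lborel \<Otimes>\<^sub>M lborel) (Geps \<theta>' K (en n))) \<longlonglongrightarrow> R1 + R2"
    by (rule tendsto_add[OF L1 L2])
  moreover have "(\<lambda>n. integral\<^sup>L (lborel \<Otimes>\<^sub>M lborel) (Geps \<theta> K (en n)) + integral\<^sup>L (lborel \<Otimes>\<^sub>M lborel) (Geps \<theta>' K (en n)))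
      \<longlonglongrightarrow> (LINT w|(lborel \<Otimes>\<^sub>M lborel). \<theta> w * complex_of_real (kern K w))"
    unfolding sum_eq[OF en] by (rule L3)
  ultimately have R: "R1 + R2 = (LINT w|lborel. \<theta> w * complex_of_real (kern K w))"
    unfolding lborel_prod by (rule LIMSEQ_unique)
  have "Psi \<theta> 1 k + Psi \<theta> (-1) k = complex_of_real (1 / (2 * pi ^ 2)) * (LINT w|lborel. \<theta> w * complex_of_real (kern \<bar>k\<bar> w))"
    by (rule LHS_eq[OF sepform_measurable[OF s] sepform_integrable[OF s] False])
  also have "\<dots> = complex_of_real (1 / (2 * pi ^ 2)) * R1 + complex_of_real (1 / (2 * pi ^ 2)) * R2"
    unfolding R[symmetric] K_def[symmetric] by (simp add: distrib_left)
  finally show ?thesis unfolding R1_def R2_def K_def \<theta>'_def by simp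
qed


end
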